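(* Let $\kappa_0=(\xi_0,\eta_0),\kappa_1=(\xi_1,\eta_1)\in S\mathbb{H}$. Then $\phi_1(\kappa_0)=\phi_1(\kappa_1)$ if and only if $\kappa_0=\kappa_1\alpha$ for some $\alpha\in\mathbb{H}$ with $|\alpha|=1$.
   Context: For $q=a+bi+cj+dk\in\mathbb{H}$, $\bar q=a-bi-cj-dk$. $\mathcal{V}=\mathrm{span}_\mathbb{R}\{1,i,j\}$. $S\mathbb{H}=\{(\xi,\eta)\in\mathbb{H}^2\setminus\{(0,0)\}:\xi\bar\eta\in\mathcal{V}\}$; $(\xi,\eta)\alpha=(\xi\alpha,\eta\alpha)$. The map $\phi_1$ sends $\kappa$ (a column) to the $2\times2$ quaternionic matrix $\kappa\bar\kappa^T=\begin{pmatrix}|\xi|^2&\xi\bar\eta\\ \eta\bar\xi&|\eta|^2\end{pmatrix}$. *)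

theory Defs
  imports Complex_Main
begin

datatype quat = Quat (qre: real) (qi: real) (qj: real) (qk: real)

definition qzero :: quat where "qzero = Quat 0 0 0 0"

definition qmult :: "quat \<Rightarrow> quat \<Rightarrow> quat" (infixl "\<cdot>\<^sub>q" 70) where
  "p \<cdot>\<^sub>q q = Quat
     (qre p * qre q - qi p * qi q - qj p * qj q - qk p * qk q)
     (qre p * qi q + qi p * qre q + qj p * qk q - qk p * qj q)
     (qre p * qj q - qi p * qk q + qj p * qre q + qk p * qi q)
     (qre p * qk q + qi p * qj q - qj p * qi q + qk p * qre q)"

definition qcnj :: "quat \<Rightarrow> quat" where
  "qcnj q = Quat (qre q) (- qi q) (- qj q) (- qk q)"

definition qnorm :: "quat \<Rightarrow> real" where
  "qnorm q = sqrt ((qre q)\<^sup>2 + (qi q)\<^sup>2 + (qj q)\<^sup>2 + (qk q)\<^sup>2)"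

definition qV :: "quat set" where
  "qV = {q. qk q = 0}"

definition SH :: "(quat \<times> quat) set" where
  "SH = {(\<xi>, \<eta>). (\<xi>, \<eta>) \<noteq> (qzero, qzero) \<and> \<xi> \<cdot>\<^sub>q qcnj \<eta> \<in> qV}"

definition ract :: "quat \<times> quat \<Rightarrow> quat \<Rightarrow> quat \<times> quat" where
  "ract \<kappa> \<alpha> = (fst \<kappa> \<cdot>\<^sub>q \<alpha>, snd \<kappa> \<cdot>\<^sub>q \<alpha>)"

text \<open>phi_1(kappa) = kappa * conj(kappa)^T, a 2x2 quaternionic matrix, represented
  as the pair of its rows ((m11, m12), (m21, m22)).\<close>
definition phi1 :: "quat \<times> quat \<Rightarrow> (quat \<times> quat) \<times> (quat \<times> quat)" where
  "phi1 \<kappa> = (case \<kappa> of (\<xi>, \<eta>) \<Rightarrow>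
     ((\<xi> \<cdot>\<^sub>q qcnj \<xi>, \<xi> \<cdot>\<^sub>q qcnj \<eta>), (\<eta> \<cdot>\<^sub>q qcnj \<xi>, \<eta> \<cdot>\<^sub>q qcnj \<eta>)))"

end

theory Submission
  imports Defs
begin

definition qR :: "real \<Rightarrow> quat" where "qR r = Quat r 0 0 0"
definition nsq :: "quat \<Rightarrow> real" where
  "nsq q = (qre q)\<^sup>2 + (qi q)\<^sup>2 + (qj q)\<^sup>2 + (qk q)\<^sup>2"

lemma q_assoc: "(p \<cdot>\<^sub>q q) \<cdot>\<^sub>q r = p \<cdot>\<^sub>q (q \<cdot>\<^sub>q r)"
  by (simp add: qmult_def algebra_simps)

lemma q_cnj_mult: "qcnj (p \<cdot>\<^sub>q q) = qcnj q \<cdot>\<^sub>q qcnj p"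
  by (simp add: qmult_def qcnj_def algebra_simps)

lemma q_cnj_cnj: "qcnj (qcnj p) = p"
  by (simp add: qcnj_def)

lemma q_mult_cnj: "p \<cdot>\<^sub>q qcnj p = qR (nsq p)"
  by (simp add: qmult_def qcnj_def qR_def nsq_def power2_eq_square algebra_simps)

lemma q_cnj_mult_self: "qcnj p \<cdot>\<^sub>q p = qR (nsq p)"
  by (simp add: qmult_def qcnj_def qR_def nsq_def power2_eq_square algebra_simps)

lemma qR_comm: "p \<cdot>\<^sub>q qR r = qR r \<cdot>\<^sub>q p"
  by (simp add: qmult_def qR_def algebra_simps)

lemma qR_mult: "qR a \<cdot>\<^sub>q qR b = qR (a * b)"
  by (simp add: qmult_def qR_def)

lemma qR_one: "qR 1 \<cdot>\<^sub>q p = p"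
  by (simp add: qmult_def qR_def)

lemma nsq_zero: "nsq p = 0 \<Longrightarrow> p = qzero"
  unfolding nsq_def qzero_def
  by (cases p) (simp add: sum_power2_eq_zero_iff add_nonneg_eq_0_iff)

lemma nsq_pos: "p \<noteq> qzero \<Longrightarrow> nsq p > 0"
proof -
  assume "p \<noteq> qzero"
  hence "nsq p \<noteq> 0" using nsq_zero by blast
  moreover have "nsq p \<ge> 0" by (simp add: nsq_def)
  ultimately show ?thesis by simp
qed

lemma qR_inj: "qR a = qR b \<Longrightarrow> a = b" by (simp add: qR_def)

lemma qnorm_nsq: "qnorm a = 1 \<longleftrightarrow> nsq a = 1"
  by (simp add: qnorm_def nsq_def)

lemma qcnj_qR: "qcnj (qR r) = qR r" by (simp add: qcnj_def qR_def)

lemma key: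
  assumes e1: "x0 \<cdot>\<^sub>q qcnj x0 = x1 \<cdot>\<^sub>q qcnj x1"
    and e2: "y0 \<cdot>\<^sub>q qcnj x0 = y1 \<cdot>\<^sub>q qcnj x1"
    and nz: "x1 \<noteq> qzero"
  shows "\<exists>\<alpha>. nsq \<alpha> = 1 \<and> x0 = x1 \<cdot>\<^sub>q \<alpha> \<and> y0 = y1 \<cdot>\<^sub>q \<alpha>"
proof -
  define n where "n = nsq x1"
  have n: "n > 0" using nsq_pos[OF nz] n_def by simp
  have n0: "nsq x0 = n" using e1 by (simp add: q_mult_cnj n_def qR_inj)
  have inv: "qR (1/n) \<cdot>\<^sub>q (qR n \<cdot>\<^sub>q z) = z" for z
  proof -
    have "qR (1/n) \<cdot>\<^sub>q (qR n \<cdot>\<^sub>q z) = qR (1/n * n) \<cdot>\<^sub>q z"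
      by (simp only: q_assoc[symmetric] qR_mult)
    also have "\<dots> = z" using n by (simp add: qR_one)
    finally show ?thesis .
  qed
  define a where "a = qR (1/n) \<cdot>\<^sub>q (qcnj x1 \<cdot>\<^sub>q x0)"
  have A: "x1 \<cdot>\<^sub>q a = x0"
  proof -
    have "x1 \<cdot>\<^sub>q a = qR (1/n) \<cdot>\<^sub>q ((x1 \<cdot>\<^sub>q qcnj x1) \<cdot>\<^sub>q x0)"
      unfolding a_def by (simp only: q_assoc[symmetric] qR_comm[of x1])
    also have "\<dots> = x0"
      by (simp only: q_mult_cnj n_def[symmetric] inv)
    finally show ?thesis .
  qed
  have B: "y1 \<cdot>\<^sub>q a = y0"
  proof -
    have "y1 \<cdot>\<^sub>q a = qR (1/n) \<cdot>\<^sub>q ((y1 \<cdot>\<^sub>q qcnj x1) \<cdot>\<^sub>q x0)"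
      unfolding a_def by (simp only: q_assoc[symmetric] qR_comm[of y1])
    also have "\<dots> = qR (1/n) \<cdot>\<^sub>q (y0 \<cdot>\<^sub>q (qcnj x0 \<cdot>\<^sub>q x0))"
      by (simp only: q_assoc[symmetric] e2)
    also have "\<dots> = qR (1/n) \<cdot>\<^sub>q (qR n \<cdot>\<^sub>q y0)"
      by (simp only: q_cnj_mult_self n0 qR_comm[of y0])
    also have "\<dots> = y0" by (rule inv)
    finally show ?thesis .
  qed
  have C: "nsq a = 1"
  proof -
    have "a \<cdot>\<^sub>q qcnj a = qR (1/n) \<cdot>\<^sub>q (qcnj x1 \<cdot>\<^sub>q ((x0 \<cdot>\<^sub>q qcnj x0) \<cdot>\<^sub>q (x1 \<cdot>\<^sub>q qR (1/n))))"
      unfolding a_def by (simp only: q_cnj_mult q_cnj_cnj qcnj_qR q_assoc)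
    also have "\<dots> = qR (1/n) \<cdot>\<^sub>q (qcnj x1 \<cdot>\<^sub>q (qR n \<cdot>\<^sub>q (x1 \<cdot>\<^sub>q qR (1/n))))"
      by (simp only: q_mult_cnj n0)
    also have "\<dots> = qR (1/n) \<cdot>\<^sub>q (qR n \<cdot>\<^sub>q ((qcnj x1 \<cdot>\<^sub>q x1) \<cdot>\<^sub>q qR (1/n)))"
      by (simp only: q_assoc[symmetric] qR_comm[of "qcnj x1"])
    also have "\<dots> = qR 1"
      using n by (simp only: q_cnj_mult_self n_def[symmetric] qR_mult) simp
    finally show ?thesis by (simp add: q_mult_cnj qR_inj)
  qed
  show ?thesis using A B C by metis
qed

lemma fwd:
  assumes "\<kappa>1 \<in> SH" and "phi1 \<kappa>0 = phi1 \<kappa>1"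
  shows "\<exists>\<alpha>. qnorm \<alpha> = 1 \<and> \<kappa>0 = ract \<kappa>1 \<alpha>"
proof -
  obtain x0 y0 where k0: "\<kappa>0 = (x0, y0)" by (cases \<kappa>0)
  obtain x1 y1 where k1: "\<kappa>1 = (x1, y1)" by (cases \<kappa>1)
  have e: "x0 \<cdot>\<^sub>q qcnj x0 = x1 \<cdot>\<^sub>q qcnj x1" "x0 \<cdot>\<^sub>q qcnj y0 = x1 \<cdot>\<^sub>q qcnj y1"
    "y0 \<cdot>\<^sub>q qcnj x0 = y1 \<cdot>\<^sub>q qcnj x1" "y0 \<cdot>\<^sub>q qcnj y0 = y1 \<cdot>\<^sub>q qcnj y1"
    using assms(2) by (auto simp: phi1_def k0 k1)
  have nz: "x1 \<noteq> qzero \<or> y1 \<noteq> qzero" using assms(1) by (auto simp: SH_def k1)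
  then obtain a where "nsq a = 1 \<and> x0 = x1 \<cdot>\<^sub>q a \<and> y0 = y1 \<cdot>\<^sub>q a"
    using key[OF e(1) e(3)] key[OF e(4) e(2)] by blast
  thus ?thesis by (auto simp: qnorm_nsq ract_def k0 k1)
qed

lemma bwd_aux: "nsq a = 1 \<Longrightarrow> (x \<cdot>\<^sub>q a) \<cdot>\<^sub>q qcnj (y \<cdot>\<^sub>q a) = x \<cdot>\<^sub>q qcnj y"
proof -
  assume h: "nsq a = 1"
  have "(x \<cdot>\<^sub>q a) \<cdot>\<^sub>q qcnj (y \<cdot>\<^sub>q a) = x \<cdot>\<^sub>q (a \<cdot>\<^sub>q qcnj a) \<cdot>\<^sub>q qcnj y"
    by (simp add: q_cnj_mult q_assoc)
  also have "\<dots> = x \<cdot>\<^sub>q qcnj y" using h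
    by (simp only: q_mult_cnj, simp add: qmult_def qR_def)
  finally show ?thesis .
qed

theorem lemma4p4:
  assumes "\<kappa>0 \<in> SH" and "\<kappa>1 \<in> SH"
  shows "phi1 \<kappa>0 = phi1 \<kappa>1 \<longleftrightarrow> (\<exists>\<alpha>. qnorm \<alpha> = 1 \<and> \<kappa>0 = ract \<kappa>1 \<alpha>)"
proof
  assume "phi1 \<kappa>0 = phi1 \<kappa>1" thus "\<exists>\<alpha>. qnorm \<alpha> = 1 \<and> \<kappa>0 = ract \<kappa>1 \<alpha>"
    using fwd assms(2) by blast
next
  assume "\<exists>\<alpha>. qnorm \<alpha> = 1 \<and> \<kappa>0 = ract \<kappa>1 \<alpha>"
  then obtain a where a: "nsq a = 1" "\<kappa>0 = ract \<kappa>1 a" by (auto simp: qnorm_nsq)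
  obtain x1 y1 where k1: "\<kappa>1 = (x1, y1)" by (cases \<kappa>1)
  show "phi1 \<kappa>0 = phi1 \<kappa>1"
    using a by (simp add: phi1_def ract_def k1 bwd_aux)
qed

end
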